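(* Let $t<n/2$ and $S=\{\{3,4\},\{5,6\},\dots,\{2t+1,2t+2\}\}$. Then $\widehat{1_{\mathcal{F}_S}}(2(n-t,1^t))\ne 0$, where $\mathcal{F}_S=\{m\in\mathcal{M}_{2n}: S\subseteq m\}$.
   Context: $\mathcal{M}_{2n}$ is the set of perfect matchings of $K_{2n}$ on $[2n]$, with the natural action of $S_{2n}$; $m^*=\{\{1,2\},\{3,4\},\dots,\{2n-1,2n\}\}$. For $f\in\mathbb{R}[\mathcal{M}_{2n}]$ let $\tilde f(\sigma)=f(\sigma m^* )$ for $\sigma\in S_{2n}$, and for an irreducible representation $\rho$ of $S_{2n}$ let $\hat f(\rho)=\frac{1}{(2n)!}\sum_{\sigma\in S_{2n}}\tilde f(\sigma)\rho(\sigma)$. $2(n-t,1^t)$ denotes the irreducible of $S_{2n}$ indexed by the partition $(2(n-t),2,\dots,2)\vdash 2n$ with $t$ parts equal to $2$. $1_{\mathcal{F}_S}$ is the characteristic function of $\mathcal{F}_S$. *)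

theory Defs
  imports "HOL-Combinatorics.Combinatorics" Complex_Main
begin

definition perfect_matchings :: "nat \<Rightarrow> nat set set set" where
  "perfect_matchings n = {m. (\<forall>e\<in>m. card e = 2 \<and> e \<subseteq> {1..2*n}) \<and>
      (\<forall>x\<in>{1..2*n}. \<exists>!e. e \<in> m \<and> x \<in> e)}"

definition mstar :: "nat \<Rightarrow> nat set set" where
  "mstar n = {{2*i - 1, 2*i} | i. i \<in> {1..n}}"

definition act_matching :: "(nat \<Rightarrow> nat) \<Rightarrow> nat set set \<Rightarrow> nat set set" where
  "act_matching \<sigma> m = (\<lambda>e. \<sigma> ` e) ` m"

definition F_S :: "nat \<Rightarrow> nat set set \<Rightarrow> nat set set set" where
  "F_S n S = {m \<in> perfect_matchings n. S \<subseteq> m}"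

definition S_t :: "nat \<Rightarrow> nat set set" where
  "S_t t = {{2*i + 1, 2*i + 2} | i. i \<in> {1..t}}"

text \<open>A partition is a list of parts; cells of its Young diagram are (row, column).\<close>
definition cells :: "nat list \<Rightarrow> (nat \<times> nat) set" where
  "cells lam = {(i, j). i < length lam \<and> j < lam ! i}"

text \<open>Tableaux: bijective fillings of the cells with 1..N (N = |lam|), extended by 0.\<close>
definition tableaux :: "nat list \<Rightarrow> ((nat \<times> nat) \<Rightarrow> nat) set" where
  "tableaux lam = {t. bij_betw t (cells lam) {1..sum_list lam} \<and>
                      (\<forall>c. c \<notin> cells lam \<longrightarrow> t c = 0)}"

text \<open>The tabloid of a tableau, represented as the map sending each entry to its row.\<close>
definition tabloid :: "nat list \<Rightarrow> ((nat \<times> nat) \<Rightarrow> nat) \<Rightarrow> (nat \<Rightarrow> nat)" where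
  "tabloid lam t = (\<lambda>x. if x \<in> {1..sum_list lam} then fst (inv_into (cells lam) t x) else 0)"

definition colstab :: "nat list \<Rightarrow> ((nat \<times> nat) \<Rightarrow> nat) \<Rightarrow> (nat \<Rightarrow> nat) set" where
  "colstab lam t = {\<pi>. \<pi> permutes {1..sum_list lam} \<and>
      (\<forall>c\<in>cells lam. \<exists>d\<in>cells lam. snd d = snd c \<and> \<pi> (t c) = t d)}"

definition polytabloid :: "nat list \<Rightarrow> ((nat \<times> nat) \<Rightarrow> nat) \<Rightarrow> ((nat \<Rightarrow> nat) \<Rightarrow> real)" where
  "polytabloid lam t = (\<lambda>T. \<Sum>\<pi>\<in>colstab lam t.
      of_int (sign \<pi>) * (if T = tabloid lam (\<pi> \<circ> t) then 1 else 0))"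

definition specht :: "nat list \<Rightarrow> ((nat \<Rightarrow> nat) \<Rightarrow> real) set" where
  "specht lam = {v. \<exists>c. v = (\<lambda>T. \<Sum>t\<in>tableaux lam. c t * polytabloid lam t T)}"

text \<open>Permutation action on functions of tabloids: sigma maps tabloid {t} to {sigma o t}.\<close>
definition tab_act :: "(nat \<Rightarrow> nat) \<Rightarrow> ((nat \<Rightarrow> nat) \<Rightarrow> real) \<Rightarrow> ((nat \<Rightarrow> nat) \<Rightarrow> real)" where
  "tab_act \<sigma> v = (\<lambda>T. v (T \<circ> \<sigma>))"

text \<open>Fourier coefficient of g : S_N -> R at the Specht representation of lam, as a linear
  operator on the Specht module: v |-> (1/N!) sum_sigma g(sigma) rho(sigma) v.\<close>
definition fourier_op :: "nat list \<Rightarrow> ((nat \<Rightarrow> nat) \<Rightarrow> real) \<Rightarrow> ((nat \<Rightarrow> nat) \<Rightarrow> real) \<Rightarrow> ((nat \<Rightarrow> nat) \<Rightarrow> real)" where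
  "fourier_op lam g v = (\<lambda>T. (1 / fact (sum_list lam)) *
      (\<Sum>\<sigma>\<in>{\<sigma>. \<sigma> permutes {1..sum_list lam}}. g \<sigma> * tab_act \<sigma> v T))"

definition fourier_nonzero :: "nat list \<Rightarrow> ((nat \<Rightarrow> nat) \<Rightarrow> real) \<Rightarrow> bool" where
  "fourier_nonzero lam g \<longleftrightarrow> (\<exists>v\<in>specht lam. fourier_op lam g v \<noteq> (\<lambda>_. 0))"

text \<open>The partition 2(n-t,1^t) = (2(n-t), 2, ..., 2) with t parts equal to 2.\<close>
definition two_hook :: "nat \<Rightarrow> nat \<Rightarrow> nat list" where
  "two_hook n t = 2 * (n - t) # replicate t 2"

definition char_fun :: "nat set set set \<Rightarrow> nat set set \<Rightarrow> real" where
  "char_fun A m = (if m \<in> A then 1 else 0)"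

definition lift :: "nat \<Rightarrow> (nat set set \<Rightarrow> real) \<Rightarrow> (nat \<Rightarrow> nat) \<Rightarrow> real" where
  "lift n f \<sigma> = f (act_matching \<sigma> (mstar n))"

end

theory Submission
  imports Defs
begin

context
  fixes n t :: nat
  assumes nt: "2 * t < n"
begin

lemma sumlam: "sum_list (two_hook n t) = 2 * n"
  using nt by (simp add: two_hook_def sum_list_replicate)

lemma cells_iff: "(i, j) \<in> cells (two_hook n t) \<longleftrightarrow>
   (i = 0 \<and> j < 2 * (n - t)) \<or> (1 \<le> i \<and> i \<le> t \<and> j < 2)"
  by (cases i) (auto simp: cells_def two_hook_def nth_Cons')

definition tau :: "nat \<times> nat \<Rightarrow> nat" where
  "tau c = (if c \<in> cells (two_hook n t) then
     (if fst c = 0 then (if snd c < 2 then snd c + 1 else 2*t+1+snd c) else 2*fst c+1+snd c) else 0)"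

definition tinv :: "nat \<Rightarrow> nat \<times> nat" where
  "tinv x = (if x \<le> 2 then (0, x - 1) else if x \<le> 2*t+2 then ((x-1) div 2, (x-1) mod 2) else (0, x - 2*t - 1))"

lemma tau_bij: "bij_betw tau (cells (two_hook n t)) {1..2*n}"
proof (rule bij_betw_byWitness[where f'=tinv])
  show "\<forall>a\<in>cells (two_hook n t). tinv (tau a) = a"
    using nt by (auto simp: cells_iff tau_def tinv_def)
  show "\<forall>a'\<in>{1..2 * n}. tau (tinv a') = a'"
    using nt by (auto simp: cells_iff tau_def tinv_def)
  show "tau ` cells (two_hook n t) \<subseteq> {1..2 * n}"
    using nt by (auto simp: cells_iff tau_def)
  show "tinv ` {1..2 * n} \<subseteq> cells (two_hook n t)"
    using nt by (auto simp: cells_iff tinv_def)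
qed

lemma tinv_cell: "x \<in> {1..2*n} \<Longrightarrow> tinv x \<in> cells (two_hook n t) \<and> tau (tinv x) = x"
  using nt by (auto simp: cells_iff tau_def tinv_def)

lemma colstab_props:
  assumes p: "p \<in> colstab (two_hook n t) tau"
  shows "p permutes {1..2*n}"
    and "odd x \<Longrightarrow> x \<le> 2*t+1 \<Longrightarrow> odd (p x) \<and> p x \<le> 2*t+1"
    and "even x \<Longrightarrow> 2 \<le> x \<Longrightarrow> x \<le> 2*t+2 \<Longrightarrow> even (p x) \<and> 2 \<le> p x \<and> p x \<le> 2*t+2"
    and "2*t+2 < x \<Longrightarrow> p x = x"
proof -
  have pp: "p permutes {1..2*n}" and col: "\<forall>c\<in>cells (two_hook n t). \<exists>d\<in>cells (two_hook n t). snd d = snd c \<and> p (tau c) = tau d"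
    using p by (auto simp: colstab_def sumlam)
  show "p permutes {1..2*n}" by (fact pp)
  show "odd x \<Longrightarrow> x \<le> 2*t+1 \<Longrightarrow> odd (p x) \<and> p x \<le> 2*t+1"
  proof -
    assume x: "odd x" "x \<le> 2*t+1"
    then have xin: "x \<in> {1..2*n}" using nt by (auto elim: oddE)
    from tinv_cell[OF xin] col obtain d where d: "d \<in> cells (two_hook n t)" "snd d = snd (tinv x)" "p x = tau d"
      by metis
    have "(x - 1) mod 2 = 0" using x by (auto elim!: oddE)
    moreover have "x \<le> 2 \<Longrightarrow> x = 1" using x by (auto elim!: oddE)
    ultimately have "snd (tinv x) = 0" using x unfolding tinv_def by auto
    obtain i j where ij: "d = (i, j)" by (cases d)
    have j1: "j = 0" using d(2) ij \<open>snd (tinv x) = 0\<close> by simp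
    have ci: "i \<le> t" using d(1) ij j1 nt by (auto simp: cells_iff)
    have "p x = (if i = 0 then 1 else 2*i+1)" using d ij j1 by (simp add: tau_def)
    then show ?thesis using ci by simp
  qed
  show "even x \<Longrightarrow> 2 \<le> x \<Longrightarrow> x \<le> 2*t+2 \<Longrightarrow> even (p x) \<and> 2 \<le> p x \<and> p x \<le> 2*t+2"
  proof -
    assume x: "even x" "2 \<le> x" "x \<le> 2*t+2"
    then have xin: "x \<in> {1..2*n}" using nt by auto
    from tinv_cell[OF xin] col obtain d where d: "d \<in> cells (two_hook n t)" "snd d = snd (tinv x)" "p x = tau d"
      by metis
    have "odd (x - 1)" using x by simp
    then have "(x - 1) mod 2 = 1" by (metis odd_iff_mod_2_eq_one)
    then have "snd (tinv x) = 1" using x unfolding tinv_def by auto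
    obtain i j where ij: "d = (i, j)" by (cases d)
    have j1: "j = 1" using d(2) ij \<open>snd (tinv x) = 1\<close> by simp
    have ci: "i \<le> t" using d(1) ij j1 nt by (auto simp: cells_iff)
    have "p x = (if i = 0 then 2 else 2*i+2)" using d ij j1 by (simp add: tau_def)
    then show ?thesis using ci by simp
  qed
  show "2*t+2 < x \<Longrightarrow> p x = x"
  proof -
    assume x: "2*t+2 < x"
    show ?thesis
    proof (cases "x \<le> 2*n")
      case False then show ?thesis using permutes_not_in[OF pp, of x] by simp
    next
      case True
      then have xin: "x \<in> {1..2*n}" using x by auto
      from tinv_cell[OF xin] col obtain d where d: "d \<in> cells (two_hook n t)" "snd d = snd (tinv x)" "p x = tau d"
        by metis
      have tx: "tinv x = (0, x - 2*t - 1)" using x by (simp add: tinv_def)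
      obtain i j where ij: "d = (i, j)" by (cases d)
      have j: "j = x - 2*t - 1" using d(2) ij tx by simp
      then have "j \<ge> 2" using x by simp
      then have "i = 0" using d(1) ij by (simp add: cells_iff)
      then have "d = tinv x" using ij j tx by simp
      then show ?thesis using d(3) tinv_cell[OF xin] by metis
    qed
  qed
qed

lemma tab_val:
  assumes "bij_betw f (cells lam) {1..sum_list lam}" "c \<in> cells lam"
  shows "tabloid lam f (f c) = fst c"
  using assms by (auto simp: tabloid_def bij_betw_def inv_into_f_f)

lemma tab_ex:
  assumes "bij_betw f (cells lam) {1..sum_list lam}" "x \<in> {1..sum_list lam}"
  shows "\<exists>c\<in>cells lam. f c = x \<and> tabloid lam f x = fst c"
proof -
  obtain c where "c \<in> cells lam" "f c = x" using assms(2) assms(1)[unfolded bij_betw_def] by (metis imageE)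
  then show ?thesis using tab_val[OF assms(1)] by metis
qed


lemma sign_one:
  assumes pp: "p permutes {1..2*n}"
  and oddA: "\<And>x. odd x \<Longrightarrow> x \<le> 2*t+1 \<Longrightarrow> odd (p x) \<and> p x \<le> 2*t+1"
  and fixo: "\<And>x. 2*t+2 < x \<Longrightarrow> p x = x"
  and pair: "\<And>x. odd x \<Longrightarrow> x \<le> 2*t+1 \<Longrightarrow> p (x+1) = p x + 1"
  shows "sign p = 1"
proof -
  define A where "A = {x::nat. odd x \<and> x \<le> 2*t+1}"
  define pA where "pA x = (if x \<in> A then p x else x)" for x
  define c where "c x = (if x \<in> A then x+1 else if even x \<and> 2 \<le> x \<and> x \<le> 2*t+2 then x-1 else x)" for x
  have finA: "finite A" unfolding A_def by auto
  have p0: "p 0 = 0" using permutes_not_in[OF pp, of 0] by simp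
  have injp: "inj_on p A" using permutes_inj[OF pp] by (simp add: inj_on_def)
  have pAA: "p ` A \<subseteq> A" using oddA by (auto simp: A_def)
  have imA: "p ` A = A" by (rule endo_inj_surj[OF finA pAA injp])
  have "bij_betw pA A A"
    unfolding bij_betw_def
  proof
    show "inj_on pA A" using injp by (auto simp: pA_def inj_on_def)
    show "pA ` A = A" using imA by (auto simp: pA_def image_def)
  qed
  then have pAp: "pA permutes A" by (rule bij_imp_permutes) (simp add: pA_def)
  then have permA: "permutation pA" using finA permutes_imp_permutation by blast
  have cc: "c (c x) = x" for x unfolding c_def A_def by (auto elim!: oddE evenE)
  have "bij_betw c {1..2*t+2} {1..2*t+2}"
    by (rule bij_betw_byWitness[where f'=c]) (auto simp: cc, auto simp: c_def A_def elim!: oddE)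
  then have "c permutes {1..2*t+2}" by (rule bij_imp_permutes) (auto simp: c_def A_def elim!: oddE)
  then have permc: "permutation c" using permutes_imp_permutation by blast
  have eq: "p = pA \<circ> c \<circ> pA \<circ> c"
  proof
    fix x
    show "p x = (pA \<circ> c \<circ> pA \<circ> c) x"
    proof (cases "x \<in> A")
      case True
      then have "c x = x + 1" "x + 1 \<notin> A" "c (x+1) = x" by (auto simp: c_def A_def elim!: oddE)
      then show ?thesis using True by (simp add: pA_def)
    next
      case F: False
      show ?thesis
      proof (cases "even x \<and> 2 \<le> x \<and> x \<le> 2*t+2")
        case True
        then have cx: "c x = x - 1" "x - 1 \<in> A" using F by (auto simp: c_def A_def)
        then have "p (x - 1) \<in> A" using pAA by auto
        then have "c (p (x-1)) = p (x-1) + 1" "p (x-1) + 1 \<notin> A" by (auto simp: c_def A_def)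
        moreover have "p x = p (x-1) + 1" using pair[of "x-1"] cx(2) True by (auto simp: A_def)
        ultimately show ?thesis using cx by (simp add: pA_def)
      next
        case False
        then have cx: "c x = x" using F unfolding c_def by auto
        have "x = 0 \<or> 2*t+2 < x" using F False by (auto simp: A_def elim!: oddE)
        then have "p x = x" using p0 fixo by auto
        then show ?thesis using cx F by (simp add: pA_def)
      qed
    qed
  qed
  have "sign p = sign pA * sign c * sign pA * sign c"
    unfolding eq using permA permc
    by (simp add: sign_compose permutation_compose)
  then show ?thesis by (simp add: sign_def)
qed


lemma tau_row: "1 \<le> j \<Longrightarrow> j \<le> t \<Longrightarrow> k < 2 \<Longrightarrow> (j, k) \<in> cells (two_hook n t) \<and> tau (j, k) = 2*j+1+k"
  by (simp add: cells_iff tau_def)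

lemma ptau_bij: "p permutes {1..2*n} \<Longrightarrow> bij_betw (p \<circ> tau) (cells (two_hook n t)) {1..sum_list (two_hook n t)}"
  unfolding sumlam using bij_betw_trans[OF tau_bij permutes_imp_bij] by blast

lemma row_elem:
  assumes pp: "p permutes {1..2*n}" and x: "x \<in> {1..2*n}"
    and tj: "tabloid (two_hook n t) (p \<circ> tau) x = j" and j: "1 \<le> j" "j \<le> t"
  shows "x = p (2*j+1) \<or> x = p (2*j+2)"
proof -
  have x': "x \<in> {1..sum_list (two_hook n t)}" using x sumlam by simp
  from tab_ex[OF ptau_bij[OF pp] x'] obtain c where c: "c \<in> cells (two_hook n t)" "(p \<circ> tau) c = x" "tabloid (two_hook n t) (p \<circ> tau) x = fst c"
    by blast
  obtain i k where ik: "c = (i, k)" by (cases c)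
  have "i = j" using c(3) tj ik by simp
  then have "k < 2" using c(1) ik j by (auto simp: cells_iff)
  then have "x = p (2*j+1+k)" using c(2) ik \<open>i = j\<close> tau_row[OF j] by simp
  then show ?thesis using \<open>k < 2\<close> by (cases k) auto
qed

lemma T0_val: "1 \<le> j \<Longrightarrow> j \<le> t \<Longrightarrow> k < 2 \<Longrightarrow> tabloid (two_hook n t) tau (2*j+1+k) = j"
  using tab_val[of tau "two_hook n t" "(j,k)"] tau_bij tau_row[of j k] unfolding sumlam by simp

lemma pairing:
  assumes p: "p \<in> colstab (two_hook n t) tau" and sp: "s permutes {1..2*n}"
    and S: "S_t t \<subseteq> act_matching s (mstar n)"
    and T: "tabloid (two_hook n t) tau \<circ> s = tabloid (two_hook n t) (p \<circ> tau)"
    and j: "1 \<le> j" "j \<le> t"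
  shows "p (2*j+2) = p (2*j+1) + 1"
proof -
  have pp: "p permutes {1..2*n}" by (rule colstab_props(1)[OF p])
  have "{2*j+1, 2*j+2} \<in> S_t t" unfolding S_t_def mem_Collect_eq using j by (intro exI[of _ j]) simp
  then have "{2*j+1, 2*j+2} \<in> (\<lambda>e. s ` e) ` mstar n" by (rule subsetD[OF S[unfolded act_matching_def]])
  then obtain e where e: "e \<in> mstar n" "{2*j+1, 2*j+2} = s ` e"
    by (metis imageE)
  then obtain k where k: "k \<in> {1..n}" "e = {2*k-1, 2*k}" unfolding mstar_def by blast
  have ev: "tabloid (two_hook n t) (p \<circ> tau) y = j" if "y \<in> e" for y
  proof -
    have "s y \<in> {2*j+1, 2*j+2}" using e(2) that by blast
    then have "s y = 2*j+1+0 \<or> s y = 2*j+1+1" by simp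
    then have "tabloid (two_hook n t) tau (s y) = j" using T0_val[OF j, of 0] T0_val[OF j, of 1] by auto
    then show ?thesis using fun_cong[OF T, of y] by simp
  qed
  have ein: "2*k-1 \<in> {1..2*n}" "2*k \<in> {1..2*n}" using k by auto
  have a: "2*k-1 = p (2*j+1) \<or> 2*k-1 = p (2*j+2)"
    using row_elem[OF pp ein(1) ev j] k by simp
  have b: "2*k = p (2*j+1) \<or> 2*k = p (2*j+2)"
    using row_elem[OF pp ein(2) ev j] k by simp
  have o: "odd (p (2*j+1))" using colstab_props(2)[OF p, of "2*j+1"] j by simp
  have ev2: "even (p (2*j+2))" using colstab_props(3)[OF p, of "2*j+2"] j by simp
  have "odd (2*k-1)" using k by auto
  then have "p (2*j+1) = 2*k-1" using a ev2 by metis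
  moreover have "p (2*j+2) = 2*k" using b o by (metis dvd_triv_left)
  ultimately show ?thesis using k by auto
qed


lemma sign_good:
  assumes p: "p \<in> colstab (two_hook n t) tau" and sp: "s permutes {1..2*n}"
    and S: "S_t t \<subseteq> act_matching s (mstar n)"
    and T: "tabloid (two_hook n t) tau \<circ> s = tabloid (two_hook n t) (p \<circ> tau)"
  shows "sign p = 1"
proof -
  have pp: "p permutes {1..2*n}" by (rule colstab_props(1)[OF p])
  have pj: "p (2*j+2) = p (2*j+1) + 1" if "1 \<le> j" "j \<le> t" for j
    using pairing[OF p sp S T that] .
  have p0: "p 0 = 0" using permutes_not_in[OF pp, of 0] by simp
  have inj: "inj p" using permutes_inj[OF pp] .
  have o1: "odd (p 1) \<and> p 1 \<le> 2*t+1" using colstab_props(2)[OF p, of 1] by simp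
  define y where "y = p 1 + 1"
  obtain z where z: "p z = y" using permutes_surj[OF pp] by (metis surjD)
  have ye: "even y" "2 \<le> y" "y \<le> 2*t+2" using o1 unfolding y_def by (auto elim!: oddE)
  have "z \<noteq> 0" proof assume "z = 0" then show False using z p0 ye by simp qed
  moreover have "\<not> (odd z \<and> z \<le> 2*t+1)" using colstab_props(2)[OF p, of z] z ye by auto
  moreover have "\<not> (2*t+2 < z)" using colstab_props(4)[OF p, of z] z ye by auto
  ultimately have zc: "z \<noteq> 0" "z \<le> 2*t+2" "\<not> (odd z \<and> z \<le> 2*t+1)" by auto
  have "even z"
  proof (rule ccontr)
    assume "odd z"
    then have "z \<noteq> 2*t+2" by auto
    then show False using zc \<open>odd z\<close> by auto
  qed
  then obtain m where m: "z = 2*m" by (auto elim!: evenE)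
  define j where "j = m - 1"
  have j: "z = 2*j+2" "j \<le> t" using m zc unfolding j_def by auto
  have "j = 0"
  proof (rule ccontr)
    assume "j \<noteq> 0"
    then have "p (2*j+1) + 1 = p 1 + 1" using pj[of j] j z y_def by simp
    then have "p (2*j+1) = p 1" by simp
    then have "2*j+1 = 1" using inj by (meson injD)
    then show False using \<open>j \<noteq> 0\<close> by simp
  qed
  then have pair0: "p 2 = p 1 + 1" using z j y_def by (simp add: numeral_2_eq_2)
  show ?thesis
  proof (rule sign_one[OF pp])
    show "odd (p x) \<and> p x \<le> 2*t+1" if "odd x" "x \<le> 2*t+1" for x
      using colstab_props(2)[OF p] that by blast
    show "p x = x" if "2*t+2 < x" for x using colstab_props(4)[OF p] that by blast
    show "p (x+1) = p x + 1" if "odd x" "x \<le> 2*t+1" for x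
    proof -
      obtain j where x: "x = 2*j+1" using \<open>odd x\<close> by (auto elim!: oddE)
      show ?thesis
      proof (cases "j = 0")
        case True then show ?thesis using x pair0 by (simp add: numeral_2_eq_2)
      next
        case False then show ?thesis using x pj[of j] that by simp
      qed
    qed
  qed
qed


lemma mstar_pm: "mstar n \<in> perfect_matchings n"
  unfolding perfect_matchings_def mem_Collect_eq
proof (intro conjI ballI)
  fix e assume "e \<in> mstar n"
  then obtain i where i: "i \<in> {1..n}" "e = {2*i-1, 2*i}" unfolding mstar_def by blast
  then show "card e = 2" by auto
  show "e \<subseteq> {1..2*n}" using i by auto
next
  fix x assume x: "x \<in> {1..2*n}"
  define i where "i = (x+1) div 2"
  have i: "i \<in> {1..n}" "x \<in> {2*i-1, 2*i}" using x unfolding i_def by auto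
  have mem: "{2*i-1, 2*i} \<in> mstar n" using i(1) unfolding mstar_def by blast
  show "\<exists>!e. e \<in> mstar n \<and> x \<in> e"
  proof (rule ex1I[of _ "{2*i-1, 2*i}"])
    show "{2*i-1, 2*i} \<in> mstar n \<and> x \<in> {2*i-1, 2*i}" using mem i by blast
    fix e assume e: "e \<in> mstar n \<and> x \<in> e"
    then obtain i' where i': "i' \<in> {1..n}" "e = {2*i'-1, 2*i'}" unfolding mstar_def by blast
    then have "x \<in> {2*i'-1, 2*i'}" using e by simp
    then have "i' = i" using i' unfolding i_def by auto
    then show "e = {2*i-1, 2*i}" using i' by simp
  qed
qed

lemma S_sub: "S_t t \<subseteq> mstar n"
proof
  fix e assume "e \<in> S_t t"
  then obtain i where i: "i \<in> {1..t}" "e = {2*i+1, 2*i+2}" unfolding S_t_def by blast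
  have "e = {2*(i+1)-1, 2*(i+1)}" using i by auto
  moreover have "i+1 \<in> {1..n}" using i nt by auto
  ultimately show "e \<in> mstar n" unfolding mstar_def by blast
qed

lemma tau_tab: "tau \<in> tableaux (two_hook n t)"
  unfolding tableaux_def using tau_bij by (simp add: sumlam tau_def)

lemma fin_cells: "finite (cells (two_hook n t))"
proof -
  have "cells (two_hook n t) \<subseteq> {0..t} \<times> {0..<2*n}"
    using nt by (auto simp: cells_iff[symmetric] split: prod.splits) (auto simp: cells_iff)
  then show ?thesis by (rule finite_subset) auto
qed

lemma fin_tab: "finite (tableaux (two_hook n t))"
proof (rule inj_on_finite[where f="\<lambda>f. restrict f (cells (two_hook n t))"])
  show "inj_on (\<lambda>f. restrict f (cells (two_hook n t))) (tableaux (two_hook n t))"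
  proof (rule inj_onI)
    fix f g assume f: "f \<in> tableaux (two_hook n t)" and g: "g \<in> tableaux (two_hook n t)"
      and eq: "restrict f (cells (two_hook n t)) = restrict g (cells (two_hook n t))"
    show "f = g"
    proof
      fix c
      have f0: "\<forall>c. c \<notin> cells (two_hook n t) \<longrightarrow> f c = 0" using f unfolding tableaux_def by blast
      have g0: "\<forall>c. c \<notin> cells (two_hook n t) \<longrightarrow> g c = 0" using g unfolding tableaux_def by blast
      show "f c = g c"
      proof (cases "c \<in> cells (two_hook n t)")
        case True then show ?thesis using fun_cong[OF eq, of c] by simp
      next
        case False then show ?thesis using f0 g0 by metis
      qed
    qed
  qed
  show "(\<lambda>f. restrict f (cells (two_hook n t))) ` tableaux (two_hook n t) \<subseteq> PiE (cells (two_hook n t)) (\<lambda>_. {1..sum_list (two_hook n t)})"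
    unfolding tableaux_def bij_betw_def by auto
  show "finite (PiE (cells (two_hook n t)) (\<lambda>_. {1..sum_list (two_hook n t)}))"
    using fin_cells by (intro finite_PiE) auto
qed

lemma id_col: "id \<in> colstab (two_hook n t) tau"
  unfolding colstab_def by (auto intro: permutes_id)

lemma fin_col: "finite (colstab (two_hook n t) tau)"
proof (rule finite_subset)
  show "colstab (two_hook n t) tau \<subseteq> {p. p permutes {1..sum_list (two_hook n t)}}"
    unfolding colstab_def by auto
  show "finite {p. p permutes {1..sum_list (two_hook n t)}}" by (rule finite_permutations) simp
qed


lemma main: "fourier_nonzero (two_hook n t) (lift n (char_fun (F_S n (S_t t))))"
proof -
  define lam where "lam = two_hook n t"
  define g where "g = lift n (char_fun (F_S n (S_t t)))"
  define v where "v = polytabloid lam tau"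
  define T0 where "T0 = tabloid lam tau"
  define P where "P = {\<sigma>. \<sigma> permutes {1..2*n}}"
  have vS: "v \<in> specht lam"
    unfolding specht_def mem_Collect_eq
  proof (intro exI[of _ "\<lambda>s. if s = tau then 1 else 0"] ext)
    fix T
    show "v T = (\<Sum>s\<in>tableaux lam. (if s = tau then 1 else 0) * polytabloid lam s T)"
    proof -
      have "(\<Sum>s\<in>tableaux lam. (if s = tau then 1 else 0) * polytabloid lam s T)
          = (\<Sum>s\<in>tableaux lam. if s = tau then polytabloid lam s T else 0)"
        by (rule sum.cong) auto
      also have "\<dots> = polytabloid lam tau T"
        using sum.delta[OF fin_tab[folded lam_def], of tau "\<lambda>s. polytabloid lam s T"] tau_tab[folded lam_def] by simp
      finally show ?thesis unfolding v_def by simp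
    qed
  qed
  have gv: "g s = (if act_matching s (mstar n) \<in> F_S n (S_t t) then 1 else 0)" for s
    unfolding g_def lift_def char_fun_def by simp
  have vval: "v T = (\<Sum>p\<in>colstab lam tau. of_int (sign p) * (if T = tabloid lam (p \<circ> tau) then 1 else 0))" for T
    unfolding v_def polytabloid_def by simp
  have nonneg: "0 \<le> g s * v (T0 \<circ> s)" if sP: "s \<in> P" for s
  proof (cases "act_matching s (mstar n) \<in> F_S n (S_t t)")
    case False then show ?thesis by (simp add: gv)
  next
    case True
    then have S: "S_t t \<subseteq> act_matching s (mstar n)" unfolding F_S_def by blast
    have sp: "s permutes {1..2*n}" using sP unfolding P_def by simp
    have "0 \<le> v (T0 \<circ> s)" unfolding vval
    proof (rule sum_nonneg)
      fix p assume p: "p \<in> colstab lam tau"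
      show "0 \<le> of_int (sign p) * (if T0 \<circ> s = tabloid lam (p \<circ> tau) then 1 else (0::real))"
      proof (cases "T0 \<circ> s = tabloid lam (p \<circ> tau)")
        case True
        then have "sign p = 1" using sign_good[OF p[unfolded lam_def] sp S] unfolding T0_def lam_def by blast
        then show ?thesis by simp
      qed simp
    qed
    then show ?thesis using True by (simp add: gv)
  qed
  have idm: "act_matching id (mstar n) = mstar n" unfolding act_matching_def by simp
  have S_id: "S_t t \<subseteq> act_matching id (mstar n)" using S_sub idm by simp
  have gid: "g id = 1" using idm mstar_pm S_sub unfolding gv F_S_def by simp
  have "0 < v (T0 \<circ> id)" unfolding vval
  proof (rule sum_pos2[OF fin_col[folded lam_def] id_col[folded lam_def]])
    show "0 < of_int (sign (id::nat\<Rightarrow>nat)) * (if T0 \<circ> id = tabloid lam (id \<circ> tau) then 1 else (0::real))"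
      unfolding T0_def by (simp add: sign_id)
    fix p assume p: "p \<in> colstab lam tau"
    show "0 \<le> of_int (sign p) * (if T0 \<circ> id = tabloid lam (p \<circ> tau) then 1 else (0::real))"
    proof (cases "T0 \<circ> id = tabloid lam (p \<circ> tau)")
      case True
      then have "sign p = 1" using sign_good[OF p[unfolded lam_def] permutes_id S_id] unfolding T0_def lam_def by blast
      then show ?thesis by simp
    qed simp
  qed
  then have pos_id: "0 < g id * v (T0 \<circ> id)" using gid by simp
  have finP: "finite P" unfolding P_def by (rule finite_permutations) simp
  have idP: "id \<in> P" unfolding P_def by (simp add: permutes_id)
  have "0 < (\<Sum>s\<in>P. g s * v (T0 \<circ> s))"
    by (rule sum_pos2[where f="\<lambda>s. g s * v (T0 \<circ> s)", OF finP idP]) (use pos_id nonneg in auto)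
  then have "0 < fourier_op lam g v T0"
    unfolding fourier_op_def tab_act_def using sumlam unfolding P_def lam_def by simp
  then have "fourier_op lam g v \<noteq> (\<lambda>_. 0)" by (metis less_irrefl)
  then show ?thesis unfolding fourier_nonzero_def using vS unfolding lam_def g_def by blast
qed

end

theorem mainTheorem17:
  fixes n t :: nat
  assumes "2 * t < n"
  shows "fourier_nonzero (two_hook n t) (lift n (char_fun (F_S n (S_t t))))"
  using main[OF assms] .

end
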